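(* Let $\mathcal{I}$ be an independent configuration of $d$ doors in which every door has the same fundamental distribution $p$, and let $A_{\mathrm{simp}}=(1,2,\dots,d)^\infty$ be the knock sequence that repeatedly knocks on doors $1,2,\dots,d$ in order. Let $X_1,\dots,X_d$ be i.i.d. positive-integer-valued random variables with $\Pr[X_i>n]=p(n)$ for all $n$. Then $$\mathbb{T}_{\mathcal{I}}(A_{\mathrm{simp}})=\Theta\big(d\cdot\mathbb{E}[\max\{X_1,\dots,X_d\}]\big),$$ with universal constants.
   Context: Doors $1,\dots,d$ ($d\ge2$) are initially closed and stay open once opened. In an independent configuration each door $i$ behaves independently of all other doors: $p(n)$ is the probability that a door is still closed after $n$ knocks on it ($p(0)=1$, $p$ non-increasing, $\sum_n p(n)<\infty$), and doors are mutually independent. A knock sequence is executed in order without any feedback; $\mathbb{T}_{\mathcal{I}}(\pi)$ denotes the expected number of knocks until all $d$ doors are open when running the sequence $\pi$. *)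

theory Defs
  imports "HOL-Probability.Probability"
begin

text \<open>Doors are indexed by 0,...,d-1. A knock sequence is a map pi :: nat => nat;
  pi t is the door knocked at step t (steps 0,1,2,...).\<close>

definition knocks :: "(nat \<Rightarrow> nat) \<Rightarrow> nat \<Rightarrow> nat \<Rightarrow> nat" where
  "knocks \<pi> i t = card {s. s < t \<and> \<pi> s = i}"

text \<open>y i = number of knocks door i needs before it opens (random, with
  Pr[y i > n] = p n). All d doors are open after the first t knocks iff:\<close>

definition all_open :: "nat \<Rightarrow> (nat \<Rightarrow> nat) \<Rightarrow> (nat \<Rightarrow> nat) \<Rightarrow> nat \<Rightarrow> bool" where
  "all_open d \<pi> y t \<longleftrightarrow> (\<forall>i<d. y i \<le> knocks \<pi> i t)"

definition finish_time :: "nat \<Rightarrow> (nat \<Rightarrow> nat) \<Rightarrow> (nat \<Rightarrow> nat) \<Rightarrow> ennreal" where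
  "finish_time d \<pi> y =
     (if \<exists>t. all_open d \<pi> y t then of_nat (LEAST t. all_open d \<pi> y t) else \<infinity>)"

text \<open>Independent configuration: the opening thresholds of the d doors are
  i.i.d. with distribution D (so Pr[door closed after n knocks] = Pr[D > n]).
  Expected number of knocks T_I(pi).\<close>

definition expected_time :: "nat \<Rightarrow> nat pmf \<Rightarrow> (nat \<Rightarrow> nat) \<Rightarrow> ennreal" where
  "expected_time d D \<pi> = (\<integral>\<^sup>+ y. finish_time d \<pi> y \<partial>(measure_pmf (Pi_pmf {..<d} 0 (\<lambda>_. D))))"

definition A_simp :: "nat \<Rightarrow> nat \<Rightarrow> nat" where
  "A_simp d t = t mod d"

definition expected_max :: "nat \<Rightarrow> nat pmf \<Rightarrow> ennreal" where
  "expected_max d X = (\<integral>\<^sup>+ x. of_nat (Max (x ` {..<d})) \<partial>(measure_pmf (Pi_pmf {..<d} 0 (\<lambda>_. X))))"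

end

theory Submission
  imports Defs
begin

lemma knocks_le:
  assumes "d > 0" "t \<le> K * d"
  shows "knocks (A_simp d) i t \<le> K"
proof -
  let ?S = "{s. s < t \<and> s mod d = i}"
  have "inj_on (\<lambda>s. s div d) ?S"
    by (intro inj_onI) (metis (mono_tags, lifting) div_mod_decomp mem_Collect_eq)
  moreover have "(\<lambda>s. s div d) ` ?S \<subseteq> {..<K}"
  proof
    fix k assume "k \<in> (\<lambda>s. s div d) ` ?S"
    then obtain s where s: "s < t" "k = s div d" by auto
    then have "s < K * d" using assms by simp
    then show "k \<in> {..<K}" using s assms
      by (simp add: less_mult_imp_div_less)
  qed
  ultimately have "card ?S \<le> card {..<K}"
    by (intro card_inj_on_le) auto
  then show ?thesis by (simp add: knocks_def A_simp_def)
qed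

lemma knocks_ge:
  assumes "d > 0" "i < d"
  shows "K \<le> knocks (A_simp d) i (K * d)"
proof -
  let ?S = "{s. s < K * d \<and> s mod d = i}"
  have "(\<lambda>k. k * d + i) ` {..<K} \<subseteq> ?S"
  proof
    fix x assume "x \<in> (\<lambda>k. k * d + i) ` {..<K}"
    then obtain k where k: "k < K" "x = k * d + i" by auto
    have "k * d + i < k * d + d" using assms by simp
    also have "\<dots> = Suc k * d" by simp
    also have "\<dots> \<le> K * d" using k by (intro mult_right_mono) auto
    finally show "x \<in> ?S" using k assms by simp
  qed
  moreover have "inj_on (\<lambda>k. k * d + i) {..<K}"
    using assms by (intro inj_onI) simp
  moreover have "finite ?S" by simp
  ultimately have "card ((\<lambda>k. k * d + i) ` {..<K}) \<le> card ?S"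
    by (intro card_mono) auto
  then show ?thesis using \<open>inj_on _ _\<close> by (simp add: card_image knocks_def A_simp_def)
qed

lemma pointwise:
  assumes d: "d \<ge> 2" and pos: "\<forall>i<d. y i > 0"
  defines "M \<equiv> Max (y ` {..<d})"
  shows "finish_time d (A_simp d) y \<le> of_nat (M * d)"
    and "of_nat (M * d) \<le> 2 * finish_time d (A_simp d) y"
proof -
  have fin: "finite (y ` {..<d})" by simp
  have ne: "y ` {..<d} \<noteq> {}" using d by (simp add: lessThan_empty_iff)
  have yM: "\<forall>i<d. y i \<le> M" using fin M_def by auto
  obtain i0 where i0: "i0 < d" "y i0 = M" using Max_in[OF fin ne] M_def by auto
  have ao: "all_open d (A_simp d) y (M * d)"
    unfolding all_open_def
  proof (intro allI impI)
    fix i assume "i < d"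
    then show "y i \<le> knocks (A_simp d) i (M * d)"
      proof -
        have "0 < d" using d by simp
        then show ?thesis using yM \<open>i < d\<close> knocks_ge[of d i M] by (blast intro: order_trans)
      qed
  qed
  then have ft: "finish_time d (A_simp d) y = of_nat (LEAST t. all_open d (A_simp d) y t)"
    by (auto simp: finish_time_def)
  show "finish_time d (A_simp d) y \<le> of_nat (M * d)"
  proof -
    have "(LEAST t. all_open d (A_simp d) y t) \<le> M * d" by (rule Least_le[of "all_open d (A_simp d) y" "M * d", OF ao])
    then show ?thesis unfolding ft by (simp only: of_nat_le_iff)
  qed
  have key: "M * d \<le> 2 * t" if "all_open d (A_simp d) y t" for t
  proof -
    have k0: "M \<le> knocks (A_simp d) i0 t" using that i0 by (auto simp: all_open_def)
    have M0: "M > 0" using pos i0 by auto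
    then obtain m where m: "M = Suc m" using not0_implies_Suc by blast
    have t1: "\<not> t \<le> m * d"
    proof
      assume "t \<le> m * d"
      then have "knocks (A_simp d) i0 t \<le> m" using knocks_le d by simp
      then show False using k0 m by simp
    qed
    have "1 \<le> knocks (A_simp d) (d - 1) t"
    proof -
      have "d - 1 < d" using d by simp
      then have "0 < y (d - 1)" "y (d - 1) \<le> knocks (A_simp d) (d - 1) t"
        using that pos by (auto simp: all_open_def)
      then show ?thesis by linarith
    qed
    then have "{s. s < t \<and> s mod d = d - 1} \<noteq> {}"
      unfolding knocks_def A_simp_def by (metis card.empty not_one_le_zero)
    then obtain s where s: "s < t" "s mod d = d - 1" by auto
    have "d - 1 \<le> s" using s(2) by (metis mod_less_eq_dividend)
    then have t2: "d \<le> t" using s d by linarith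
    have "M * d = m * d + d" using m by simp
    then show ?thesis using t1 t2 by linarith
  qed
  have "M * d \<le> 2 * (LEAST t. all_open d (A_simp d) y t)"
    using key LeastI[of "all_open d (A_simp d) y", OF ao] by blast
  then have "of_nat (M * d) \<le> (of_nat (2 * (LEAST t. all_open d (A_simp d) y t)) :: ennreal)"
    by (simp only: of_nat_le_iff)
  then show "of_nat (M * d) \<le> 2 * finish_time d (A_simp d) y"
    unfolding ft by simp
qed

lemma half_eq: "ennreal (1/2 * real d) * of_nat M = ennreal (1/2) * (of_nat (M * d)::ennreal)"
proof -
  have "ennreal (1/2 * real d) * of_nat M = ennreal (1/2 * real d * real M)"
    by (simp only: ennreal_of_nat_eq_real_of_nat, subst ennreal_mult[symmetric]) auto
  also have "\<dots> = ennreal (1/2) * ennreal (real (M * d))"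
    by (subst ennreal_mult[symmetric]) (auto simp: mult_ac)
  finally show ?thesis by (simp add: ennreal_of_nat_eq_real_of_nat)
qed

lemma half_two: "ennreal (1/2) * (2 * (F::ennreal)) = F"
proof -
  have "ennreal (1/2) * 2 = 1"
    by (metis ennreal_numeral ennreal_mult' ennreal_1 divide_self_if mult.commute times_divide_eq_right zero_le_numeral zero_neq_numeral mult_1)
  then show ?thesis by (simp add: mult.assoc[symmetric])
qed

lemma one_eq: "(of_nat (M * d)::ennreal) = ennreal (1 * real d) * of_nat M"
  by (simp add: ennreal_of_nat_eq_real_of_nat ennreal_mult[symmetric] mult_ac)

theorem mainTheorem3:
  shows "\<exists>c C :: real. c > 0 \<and> C > 0 \<and>
    (\<forall>(d::nat) (p::nat \<Rightarrow> real) (X::nat pmf).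
       d \<ge> 2 \<longrightarrow> p 0 = 1 \<longrightarrow> antimono p \<longrightarrow> summable p \<longrightarrow>
       (\<forall>n. measure_pmf.prob X {m. n < m} = p n) \<longrightarrow>
       ennreal (c * real d) * expected_max d X \<le> expected_time d X (A_simp d) \<and>
       expected_time d X (A_simp d) \<le> ennreal (C * real d) * expected_max d X)"
proof (rule exI[of _ "1/2"], rule exI[of _ 1], intro conjI allI impI)
  show "(0::real) < 1/2" by simp
  show "(0::real) < 1" by simp
  fix d :: nat and p :: "nat \<Rightarrow> real" and X :: "nat pmf"
  assume d: "d \<ge> 2" and p0: "p 0 = 1" and "antimono p" and "summable p" and hp: "\<forall>n. measure_pmf.prob X {m. n < m} = p n"
  have "measure_pmf.prob X {m. 0 < m} = 1" using hp p0 by simp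
  then have "AE x in measure_pmf X. x \<in> {m. 0 < m}"
    by (subst (asm) measure_pmf.prob_eq_1) auto
  then have Xpos: "\<And>x. x \<in> set_pmf X \<Longrightarrow> x > 0"
    by (auto simp: AE_measure_pmf_iff)
  let ?P = "measure_pmf (Pi_pmf {..<d} 0 (\<lambda>_. X))"
  have posy: "\<forall>i<d. y i > 0" if "y \<in> set_pmf (Pi_pmf {..<d} 0 (\<lambda>_. X))" for y
    using that Xpos by (auto simp: set_Pi_pmf PiE_dflt_def)
  show "ennreal (1/2 * real d) * expected_max d X \<le> expected_time d X (A_simp d)"
  proof -
    have "ennreal (1/2 * real d) * expected_max d X =
        (\<integral>\<^sup>+ y. ennreal (1/2 * real d) * of_nat (Max (y ` {..<d})) \<partial>?P)"
      unfolding expected_max_def by (simp add: nn_integral_cmult)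
    also have "\<dots> \<le> (\<integral>\<^sup>+ y. finish_time d (A_simp d) y \<partial>?P)"
    proof (intro nn_integral_mono_AE AE_pmfI)
      fix y assume y: "y \<in> set_pmf (Pi_pmf {..<d} 0 (\<lambda>_. X))"
      have h: "of_nat (Max (y ` {..<d}) * d) \<le> 2 * finish_time d (A_simp d) y"
        using pointwise(2)[OF d posy[OF y]] by simp
      have "ennreal (1/2 * real d) * of_nat (Max (y ` {..<d})) = ennreal (1/2) * of_nat (Max (y ` {..<d}) * d)"
        by (rule half_eq)
      also have "\<dots> \<le> ennreal (1/2) * (2 * finish_time d (A_simp d) y)"
        by (intro mult_left_mono h) auto
      also have "\<dots> = finish_time d (A_simp d) y"
        by (rule half_two)
      finally show "ennreal (1/2 * real d) * of_nat (Max (y ` {..<d})) \<le> finish_time d (A_simp d) y" .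
    qed
    finally show ?thesis unfolding expected_time_def .
  qed
  show "expected_time d X (A_simp d) \<le> ennreal (1 * real d) * expected_max d X"
  proof -
    have "expected_time d X (A_simp d) \<le> (\<integral>\<^sup>+ y. ennreal (1 * real d) * of_nat (Max (y ` {..<d})) \<partial>?P)"
      unfolding expected_time_def
    proof (intro nn_integral_mono_AE AE_pmfI)
      fix y assume y: "y \<in> set_pmf (Pi_pmf {..<d} 0 (\<lambda>_. X))"
      have "finish_time d (A_simp d) y \<le> of_nat (Max (y ` {..<d}) * d)"
        using pointwise(1)[OF d posy[OF y]] by simp
      also have "\<dots> = ennreal (1 * real d) * of_nat (Max (y ` {..<d}))"
        by (rule one_eq)
      finally show "finish_time d (A_simp d) y \<le> ennreal (1 * real d) * of_nat (Max (y ` {..<d}))" .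
    qed
    also have "\<dots> = ennreal (1 * real d) * expected_max d X"
      unfolding expected_max_def by (simp add: nn_integral_cmult)
    finally show ?thesis .
  qed
qed

end
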